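(* For every $\epsilon>0$ there is an instance with uniform weights on which $$\mathrm{opt}_M\text{-}\mathrm{MAX}=\mathrm{opt}_M\text{-}\mathrm{SUM}\ \ge\ (2-\epsilon)\,\mathrm{opt}\text{-}\mathrm{MAX}=(2-\epsilon)\,\mathrm{opt}\text{-}\mathrm{SUM}.$$
   Context: An instance consists of a finite set $E$ of $n$ elements and $m$ tests, test $i$ being a subset $s_i\subseteq E$, with element weights $p_e$; uniform weights mean $p_e=1/n$ for SUM objectives and $p_e=1$ for MAX objectives. A schedule is an infinite test sequence; stochastic schedules choose $\sigma_t$ randomly depending on the past; memoryless schedules draw each $\sigma_t$ i.i.d. from a distribution $q$ on tests. Detection time $T(e,t)=\mathbb{E}[1+\min\{h\ge0:e\in s_{\sigma_{t+h}}\}]$, $E_t[e]=\lim_H\frac1H\sum_{t\le H}T(e,t)$; valid schedules have $\sup_tT(e,t)<\infty$, $E_t[e]$ existing for all $e$, and convergent test frequencies. $\mathrm{opt}\text{-}\mathrm{SUM}$, $\mathrm{opt}\text{-}\mathrm{MAX}$: infima over valid stochastic schedules of $\sum_ep_eE_t[e]$ and $\max_ep_eE_t[e]$ respectively; $\mathrm{opt}_M\text{-}\mathrm{SUM}$, $\mathrm{opt}_M\text{-}\mathrm{MAX}$: the same infima over memoryless schedules. *)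

theory Defs
  imports "HOL-Probability.Probability"
begin

definition is_instance :: "nat \<Rightarrow> nat \<Rightarrow> (nat \<Rightarrow> nat set) \<Rightarrow> bool" where
  "is_instance n m s \<longleftrightarrow> 0 < n \<and> (\<forall>i<m. s i \<subseteq> {..<n})"

text \<open>Space of test sequences (sigma_t = omega t).\<close>
definition seq_space :: "(nat \<Rightarrow> nat) measure" where
  "seq_space = PiM UNIV (\<lambda>_. count_space (UNIV :: nat set))"

definition stoch_schedule :: "nat \<Rightarrow> (nat \<Rightarrow> nat) measure \<Rightarrow> bool" where
  "stoch_schedule m M \<longleftrightarrow> prob_space M \<and> sets M = sets seq_space \<and>
     (AE \<omega> in M. \<forall>t. \<omega> t < m)"

definition memoryless_schedule :: "nat \<Rightarrow> (nat \<Rightarrow> nat) measure \<Rightarrow> bool" where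
  "memoryless_schedule m M \<longleftrightarrow>
     (\<exists>q :: nat pmf. set_pmf q \<subseteq> {..<m} \<and> M = PiM UNIV (\<lambda>_. measure_pmf q))"

definition hit_time :: "(nat \<Rightarrow> nat set) \<Rightarrow> nat \<Rightarrow> nat \<Rightarrow> (nat \<Rightarrow> nat) \<Rightarrow> ennreal" where
  "hit_time s e t \<omega> =
     (if \<exists>h. e \<in> s (\<omega> (t + h)) then of_nat (Suc (LEAST h. e \<in> s (\<omega> (t + h)))) else \<infinity>)"

definition det_time :: "(nat \<Rightarrow> nat set) \<Rightarrow> (nat \<Rightarrow> nat) measure \<Rightarrow> nat \<Rightarrow> nat \<Rightarrow> ennreal" where
  "det_time s M e t = (\<integral>\<^sup>+ \<omega>. hit_time s e t \<omega> \<partial>M)"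

definition avg_det_seq :: "(nat \<Rightarrow> nat set) \<Rightarrow> (nat \<Rightarrow> nat) measure \<Rightarrow> nat \<Rightarrow> nat \<Rightarrow> real" where
  "avg_det_seq s M e H = (\<Sum>t<H. enn2real (det_time s M e t)) / real H"

definition Et :: "(nat \<Rightarrow> nat set) \<Rightarrow> (nat \<Rightarrow> nat) measure \<Rightarrow> nat \<Rightarrow> real" where
  "Et s M e = lim (avg_det_seq s M e)"

definition test_freq_seq :: "(nat \<Rightarrow> nat) measure \<Rightarrow> nat \<Rightarrow> nat \<Rightarrow> real" where
  "test_freq_seq M i H = (\<Sum>t<H. measure M {\<omega> \<in> space M. \<omega> t = i}) / real H"

definition valid_schedule :: "nat \<Rightarrow> nat \<Rightarrow> (nat \<Rightarrow> nat set) \<Rightarrow> (nat \<Rightarrow> nat) measure \<Rightarrow> bool" where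
  "valid_schedule n m s M \<longleftrightarrow> stoch_schedule m M \<and>
     (\<forall>e<n. (\<exists>B::real. \<forall>t. det_time s M e t \<le> ennreal B) \<and> convergent (avg_det_seq s M e)) \<and>
     (\<forall>i<m. convergent (test_freq_seq M i))"

text \<open>Objectives with uniform weights: p_e = 1/n for SUM, p_e = 1 for MAX.\<close>
definition sum_obj :: "nat \<Rightarrow> (nat \<Rightarrow> nat set) \<Rightarrow> (nat \<Rightarrow> nat) measure \<Rightarrow> real" where
  "sum_obj n s M = (\<Sum>e<n. (1 / real n) * Et s M e)"

definition max_obj :: "nat \<Rightarrow> (nat \<Rightarrow> nat set) \<Rightarrow> (nat \<Rightarrow> nat) measure \<Rightarrow> real" where
  "max_obj n s M = Max ((\<lambda>e. Et s M e) ` {..<n})"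

definition opt_SUM :: "nat \<Rightarrow> nat \<Rightarrow> (nat \<Rightarrow> nat set) \<Rightarrow> ereal" where
  "opt_SUM n m s = Inf {ereal (sum_obj n s M) | M. valid_schedule n m s M}"

definition opt_MAX :: "nat \<Rightarrow> nat \<Rightarrow> (nat \<Rightarrow> nat set) \<Rightarrow> ereal" where
  "opt_MAX n m s = Inf {ereal (max_obj n s M) | M. valid_schedule n m s M}"

definition optM_SUM :: "nat \<Rightarrow> nat \<Rightarrow> (nat \<Rightarrow> nat set) \<Rightarrow> ereal" where
  "optM_SUM n m s = Inf {ereal (sum_obj n s M) | M. memoryless_schedule m M \<and> valid_schedule n m s M}"

definition optM_MAX :: "nat \<Rightarrow> nat \<Rightarrow> (nat \<Rightarrow> nat set) \<Rightarrow> ereal" where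
  "optM_MAX n m s = Inf {ereal (max_obj n s M) | M. memoryless_schedule m M \<and> valid_schedule n m s M}"

end

theory Submission
  imports Defs
begin

lemma pred_coord[measurable]: "Measurable.pred (PiM UNIV (\<lambda>_. count_space (UNIV::nat set))) (\<lambda>\<omega>::nat\<Rightarrow>nat. P (\<omega> i))"
  by (rule pred_sets1[where f="\<lambda>\<omega>. \<omega> i" and M="count_space UNIV"]) (auto intro!: measurable_component_singleton)

lemma suminf_one_ennreal: "(\<Sum>j. (1::ennreal)) = \<top>"
proof -
  have "\<not> summable (\<lambda>_. 1::real)" by (simp add: summable_const_iff)
  from summable_iff_suminf_neq_top[OF _ this] show ?thesis by simp
qed

lemma hit_sum: "hit_time s e t \<omega> = (\<Sum>j. indicator {\<omega>. \<forall>i<j. e \<notin> s (\<omega> (t+i))} \<omega> :: ennreal)"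
proof (cases "\<exists>h. e \<in> s (\<omega> (t + h))")
  case True
  define h0 where "h0 = (LEAST h. e \<in> s (\<omega> (t + h)))"
  have h0: "e \<in> s (\<omega> (t + h0))" unfolding h0_def using True by (metis LeastI)
  have nh: "\<And>i. i < h0 \<Longrightarrow> e \<notin> s (\<omega> (t + i))" unfolding h0_def using not_less_Least by blast
  have f: "indicator {\<omega>. \<forall>i<j. e \<notin> s (\<omega> (t+i))} \<omega> = (if j \<le> h0 then 1 else (0::ennreal))" for j
    using h0 nh by (auto simp: indicator_def not_le)
  have "(\<Sum>j. indicator {\<omega>. \<forall>i<j. e \<notin> s (\<omega> (t+i))} \<omega> :: ennreal) = (\<Sum>j\<in>{..h0}. (1::ennreal))"
    unfolding f by (subst suminf_finite[where N="{..h0}"]) auto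
  also have "\<dots> = of_nat (Suc h0)" by simp
  finally show ?thesis using True unfolding hit_time_def h0_def by simp
next
  case False
  then have f: "indicator {\<omega>. \<forall>i<j. e \<notin> s (\<omega> (t+i))} \<omega> = (1::ennreal)" for j
    by (auto simp: indicator_def)
  show ?thesis using False unfolding hit_time_def f suminf_one_ennreal by simp
qed

lemma hit_meas: "hit_time s e t \<in> borel_measurable seq_space"
proof -
  have "(\<lambda>\<omega>. \<Sum>j. indicator {\<omega>. \<forall>i<j. e \<notin> s (\<omega> (t+i))} \<omega> :: ennreal) \<in> borel_measurable seq_space"
    unfolding seq_space_def by measurable
  then show ?thesis by (subst (asm) hit_sum[symmetric])
qed

lemma hit_meas': "sets M = sets seq_space \<Longrightarrow> hit_time s e t \<in> borel_measurable M"
  using hit_meas measurable_cong_sets by blast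

lemma sum_card_le: "finite B \<Longrightarrow> (\<Sum>i<card B. i) \<le> \<Sum>B" for B :: "nat set"
proof (induction "card B" arbitrary: B)
  case 0 then show ?case by simp
next
  case (Suc n)
  then have ne: "B \<noteq> {}" by auto
  define m where "m = Max B"
  have mB: "m \<in> B" using Suc.prems ne m_def by simp
  have sub: "B \<subseteq> {..m}" using Suc.prems m_def by auto
  have "card B \<le> Suc m" using card_mono[OF _ sub] by simp
  then have nm: "n \<le> m" using Suc.hyps by simp
  have cB: "card (B - {m}) = n" using Suc.hyps mB Suc.prems by simp
  have IH: "(\<Sum>i<n. i) \<le> \<Sum>(B - {m})" using Suc.hyps(1)[of "B - {m}"] cB Suc.prems by simp
  have "\<Sum>B = m + \<Sum>(B - {m})" using Suc.prems mB by (simp add: sum.remove)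
  then show ?case using IH nm Suc.hyps(2)[symmetric] by simp
qed

lemma sum_inj_le: "inj_on g {..<k} \<Longrightarrow> (\<Sum>i<k. i) \<le> (\<Sum>e<k. g e)" for g :: "nat \<Rightarrow> nat"
proof -
  assume inj: "inj_on g {..<k}"
  have "card (g ` {..<k}) = k" using card_image[OF inj] by simp
  moreover have "(\<Sum>e<k. g e) = \<Sum>(g ` {..<k})" using sum.reindex[OF inj, of id] by simp
  ultimately show ?thesis using sum_card_le[of "g ` {..<k}"] by simp
qed

lemma hit_sum_lower: "(of_nat (\<Sum>i<k. Suc i) :: ennreal) \<le> (\<Sum>e<k. hit_time (\<lambda>i. {i}) e t \<omega>)"
proof (cases "\<exists>e<k. \<not> (\<exists>h. e \<in> {\<omega> (t + h)})")
  case True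
  then obtain e where e: "e < k" "\<not> (\<exists>h. e \<in> {\<omega> (t + h)})" by blast
  have "hit_time (\<lambda>i. {i}) e t \<omega> = \<top>" using e unfolding hit_time_def by simp
  moreover have "(\<Sum>e<k. hit_time (\<lambda>i. {i}) e t \<omega>) = hit_time (\<lambda>i. {i}) e t \<omega> + (\<Sum>e\<in>{..<k}-{e}. hit_time (\<lambda>i. {i}) e t \<omega>)"
    using e by (simp add: sum.remove)
  ultimately have "(\<Sum>e<k. hit_time (\<lambda>i. {i}) e t \<omega>) = \<top>" by simp
  then show ?thesis by (metis top_greatest)
next
  case False
  define g where "g e = (LEAST h. e \<in> {\<omega> (t + h)})" for e
  have g: "e < k \<Longrightarrow> \<omega> (t + g e) = e" for e
    using False unfolding g_def by (metis (mono_tags, lifting) LeastI singletonD)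
  have inj: "inj_on g {..<k}" by (rule inj_onI) (metis g lessThan_iff)
  have hit: "e < k \<Longrightarrow> hit_time (\<lambda>i. {i}) e t \<omega> = of_nat (Suc (g e))" for e
    using False unfolding hit_time_def g_def by auto
  have "(\<Sum>e<k. hit_time (\<lambda>i. {i}) e t \<omega>) = (\<Sum>e<k. of_nat (Suc (g e)))" by (simp add: hit)
  also have "\<dots> = of_nat (\<Sum>e<k. Suc (g e))" by simp
  finally have eq: "(\<Sum>e<k. hit_time (\<lambda>i. {i}) e t \<omega>) = of_nat (\<Sum>e<k. Suc (g e))" .
  have "(\<Sum>i<k. Suc i) \<le> (\<Sum>e<k. Suc (g e))" 
  proof -
    have a: "(\<Sum>i<k. Suc i) = k + (\<Sum>i<k. i)" by (induction k) auto
    have b: "(\<Sum>e<k. Suc (g e)) = k + (\<Sum>e<k. g e)" by (induction k) auto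
    show ?thesis unfolding a b using sum_inj_le[OF inj] by simp
  qed
  then show ?thesis unfolding eq by (rule of_nat_mono)
qed

lemma det_sum_lower:
  assumes ps: "prob_space M" and sets: "sets M = sets seq_space"
  shows "(of_nat (\<Sum>i<k. Suc i) :: ennreal) \<le> (\<Sum>e<k. det_time (\<lambda>i. {i}) M e t)"
proof -
  have "(\<Sum>e<k. det_time (\<lambda>i. {i}) M e t) = (\<integral>\<^sup>+\<omega>. (\<Sum>e<k. hit_time (\<lambda>i. {i}) e t \<omega>) \<partial>M)"
    unfolding det_time_def by (rule nn_integral_sum[symmetric]) (rule hit_meas'[OF sets])
  also have "\<dots> \<ge> (\<integral>\<^sup>+\<omega>. of_nat (\<Sum>i<k. Suc i) \<partial>M)"
    by (rule nn_integral_mono) (rule hit_sum_lower)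
  moreover have "(\<integral>\<^sup>+\<omega>. of_nat (\<Sum>i<k. Suc i) \<partial>M) = of_nat (\<Sum>i<k. Suc i)"
    using prob_space.emeasure_space_1[OF ps] by simp
  ultimately show ?thesis by simp
qed

lemma Et_tendsto: "convergent (avg_det_seq s M e) \<Longrightarrow> avg_det_seq s M e \<longlonglongrightarrow> Et s M e"
  unfolding Et_def by (simp add: convergent_LIMSEQ_iff)

lemma valid_lower:
  assumes v: "valid_schedule k m (\<lambda>i. {i}) M"
  shows "real (\<Sum>i<k. Suc i) \<le> (\<Sum>e<k. Et (\<lambda>i. {i}) M e)"
proof -
  let ?s = "\<lambda>i::nat. {i::nat}"
  have ps: "prob_space M" and sets: "sets M = sets seq_space" using v
    unfolding valid_schedule_def stoch_schedule_def by auto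
  have fin: "det_time ?s M e t < \<top>" if "e < k" for e t
  proof -
    have "\<exists>B::real. \<forall>t. det_time ?s M e t \<le> ennreal B" using v that unfolding valid_schedule_def by blast
    then obtain B :: real where "\<forall>t. det_time ?s M e t \<le> ennreal B" by blast
    then show ?thesis by (metis ennreal_less_top order_le_less_trans)
  qed
  have realb: "real (\<Sum>i<k. Suc i) \<le> (\<Sum>e<k. enn2real (det_time ?s M e t))" for t
  proof -
    have "(\<Sum>e<k. det_time ?s M e t) = (\<Sum>e<k. ennreal (enn2real (det_time ?s M e t)))"
      using fin by (intro sum.cong) (auto simp: ennreal_enn2real)
    also have "\<dots> = ennreal (\<Sum>e<k. enn2real (det_time ?s M e t))" by simp
    finally have "ennreal (real (\<Sum>i<k. Suc i)) \<le> ennreal (\<Sum>e<k. enn2real (det_time ?s M e t))"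
      using det_sum_lower[OF ps sets, of k t] by (simp add: ennreal_of_nat_eq_real_of_nat)
    then show ?thesis by (simp add: ennreal_le_iff sum_nonneg)
  qed
  have avg: "real (\<Sum>i<k. Suc i) \<le> (\<Sum>e<k. avg_det_seq ?s M e H)" if "H \<ge> 1" for H
  proof -
    have "(\<Sum>e<k. avg_det_seq ?s M e H) = (\<Sum>t<H. \<Sum>e<k. enn2real (det_time ?s M e t)) / real H"
      unfolding avg_det_seq_def by (simp add: sum_divide_distrib[symmetric] sum.swap[of _ "{..<k}"])
    moreover have "real H * real (\<Sum>i<k. Suc i) \<le> (\<Sum>t<H. \<Sum>e<k. enn2real (det_time ?s M e t))"
      using sum_mono[of "{..<H}" "\<lambda>_. real (\<Sum>i<k. Suc i)", OF realb] by simp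
    ultimately show ?thesis using that by (simp add: pos_le_divide_eq mult.commute)
  qed
  have "(\<lambda>H. \<Sum>e<k. avg_det_seq ?s M e H) \<longlonglongrightarrow> (\<Sum>e<k. Et ?s M e)"
    by (rule tendsto_sum) (use v Et_tendsto in \<open>auto simp: valid_schedule_def\<close>)
  then show ?thesis by (rule LIMSEQ_le_const) (use avg in auto)
qed

lemma sum_obj_eq: "sum_obj n s M = (\<Sum>e<n. Et s M e) / real n"
  unfolding sum_obj_def by (simp add: sum_divide_distrib)

lemma sum_le_max: "0 < n \<Longrightarrow> sum_obj n s M \<le> max_obj n s M"
proof -
  assume n: "0 < n"
  have "\<And>e. e < n \<Longrightarrow> Et s M e \<le> max_obj n s M" unfolding max_obj_def by (rule Max_ge) auto
  then have "(\<Sum>e<n. Et s M e) \<le> (\<Sum>e<n. max_obj n s M)" by (intro sum_mono) auto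
  then have "(\<Sum>e<n. Et s M e) \<le> real n * max_obj n s M" by simp
  then show ?thesis unfolding sum_obj_eq using n
    by (simp add: divide_le_eq mult.commute)
qed

lemma modinj: "u < k \<Longrightarrow> u' < k \<Longrightarrow> (t+u) mod k = (t+u') mod k \<Longrightarrow> u = u'" for u u' t k :: nat
proof -
  have key: "a < k \<Longrightarrow> b < k \<Longrightarrow> a \<le> b \<Longrightarrow> (t+a) mod k = (t+b) mod k \<Longrightarrow> a = b" for a b :: nat
  proof -
    assume a: "a < k" "b < k" "a \<le> b" "(t+a) mod k = (t+b) mod k"
    then have "k dvd (t+b) - (t+a)" using mod_eq_dvd_iff_nat[of "t+a" "t+b" k] by simp
    then have d: "k dvd b - a" by simp
    show "a = b"
    proof (rule ccontr)
      assume "a \<noteq> b"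
      then have "0 < b - a" using a by simp
      with d have "k \<le> b - a" by (rule dvd_imp_le)
      with a show False by simp
    qed
  qed
  assume "u < k" "u' < k" "(t+u) mod k = (t+u') mod k"
  then show "u = u'" using key[of u u'] key[of u' u] by (cases "u \<le> u'") auto
qed

lemma modsurj: "0 < k \<Longrightarrow> (\<lambda>u. (t+u) mod k) ` {..<k} = {..<k}" for t k :: nat
proof -
  assume k: "0 < k"
  have inj: "inj_on (\<lambda>u. (t+u) mod k) {..<k}" by (rule inj_onI) (auto intro: modinj)
  have sub: "(\<lambda>u. (t+u) mod k) ` {..<k} \<subseteq> {..<k}" using k by auto
  show ?thesis by (rule card_subset_eq) (use sub card_image[OF inj] in auto)
qed

definition phase_sched :: "nat \<Rightarrow> (nat \<Rightarrow> nat) measure" where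
  "phase_sched k = distr (measure_pmf (pmf_of_set {..<k})) seq_space (\<lambda>u t. (t+u) mod k)"

lemma space_seq: "space seq_space = UNIV"
  unfolding seq_space_def by (simp add: space_PiM)

lemma phi_meas: "(\<lambda>u t. (t+u) mod k) \<in> measure_pmf q \<rightarrow>\<^sub>M seq_space"
  by (simp add: measurable_pmf_measure1 space_seq)

lemma phase_stoch: "0 < k \<Longrightarrow> stoch_schedule k (phase_sched k)"
proof -
  assume k: "0 < k"
  have ps: "prob_space (phase_sched k)" unfolding phase_sched_def
    by (rule measure_pmf.prob_space_distr) (rule phi_meas)
  have "Measurable.pred seq_space (\<lambda>\<omega>. \<forall>t. \<omega> t < k)" unfolding seq_space_def by measurable
  then have "AE \<omega> in phase_sched k. \<forall>t. \<omega> t < k" unfolding phase_sched_def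
    by (subst AE_distr_iff[OF phi_meas]) (auto simp: pred_def k)
  with ps show ?thesis unfolding stoch_schedule_def phase_sched_def by simp
qed

lemma gauss_real: "real (\<Sum>i<k. Suc i) = real k * (real k + 1) / 2"
  by (induction k) (auto simp: field_simps)

lemma phase_hitsum:
  assumes k: "0 < k" and e: "e < k"
  shows "(\<Sum>u<k. hit_time (\<lambda>i. {i}) e t (\<lambda>t'. (t'+u) mod k)) = of_nat (\<Sum>i<k. Suc i)"
proof -
  define g where "g u = (LEAST h. e \<in> {(t + h + u) mod k})" for u
  have ex: "\<exists>h<k. (t + h + u) mod k = e" for u
  proof -
    have "e \<in> (\<lambda>h. (t+u+h) mod k) ` {..<k}" using modsurj[OF k, of "t+u"] e by simp
    then show ?thesis by (auto simp: add_ac)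
  qed
  have g1: "(t + g u + u) mod k = e" for u
    using ex[of u] unfolding g_def by (metis (mono_tags, lifting) LeastI singletonD singletonI)
  have g2: "g u < k" for u
  proof -
    obtain h where "h < k" "(t + h + u) mod k = e" using ex by blast
    then show ?thesis unfolding g_def by (metis (mono_tags, lifting) Least_le order_le_less_trans singletonI)
  qed
  have inj: "inj_on g {..<k}"
  proof (rule inj_onI)
    fix u u' assume "u \<in> {..<k}" "u' \<in> {..<k}" "g u = g u'"
    then show "u = u'" using g1[of u] g1[of u'] modinj[of u k u' "t + g u"] by (auto simp: add_ac)
  qed
  have img: "g ` {..<k} = {..<k}"
    by (rule card_subset_eq) (use g2 card_image[OF inj] in auto)
  have hit: "hit_time (\<lambda>i. {i}) e t (\<lambda>t'. (t'+u) mod k) = of_nat (Suc (g u))" for u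
    using ex[of u] unfolding hit_time_def g_def by (auto simp: add_ac)
  have "(\<Sum>u<k. Suc (g u)) = (\<Sum>i<k. Suc i)"
    using sum.reindex[OF inj, of Suc] img by simp
  then show ?thesis unfolding hit by (metis of_nat_sum)
qed

lemma phase_det:
  assumes k: "0 < k" and e: "e < k"
  shows "det_time (\<lambda>i. {i}) (phase_sched k) e t = ennreal (real (\<Sum>i<k. Suc i) / real k)"
proof -
  have "det_time (\<lambda>i. {i}) (phase_sched k) e t =
      (\<integral>\<^sup>+u. hit_time (\<lambda>i. {i}) e t (\<lambda>t'. (t'+u) mod k) \<partial>measure_pmf (pmf_of_set {..<k}))"
    unfolding det_time_def phase_sched_def
    by (rule nn_integral_distr[OF phi_meas]) (rule hit_meas'; simp)
  also have "\<dots> = (\<Sum>u<k. hit_time (\<lambda>i. {i}) e t (\<lambda>t'. (t'+u) mod k)) / of_nat k"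
    using k by (subst nn_integral_pmf_of_set) auto
  also have "\<dots> = ennreal (real (\<Sum>i<k. Suc i)) / ennreal (real k)"
    unfolding phase_hitsum[OF k e] by (simp add: ennreal_of_nat_eq_real_of_nat)
  also have "\<dots> = ennreal (real (\<Sum>i<k. Suc i) / real k)"
    using k by (intro divide_ennreal) (auto simp: sum_nonneg)
  finally show ?thesis .
qed

lemma const_avg:
  assumes "\<And>t. det_time s M e t = ennreal c" "0 \<le> c"
  shows "avg_det_seq s M e \<longlonglongrightarrow> c"
proof -
  have "\<forall>\<^sub>F H in sequentially. c = avg_det_seq s M e H"
    unfolding eventually_sequentially
    by (rule exI[of _ 1]) (auto simp: avg_det_seq_def assms)
  then show ?thesis by (rule Lim_transform_eventually[OF tendsto_const])
qed

lemma const_Et: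
  assumes "\<And>t. det_time s M e t = ennreal c" "0 \<le> c"
  shows "convergent (avg_det_seq s M e)" "Et s M e = c"
proof -
  have t: "avg_det_seq s M e \<longlonglongrightarrow> c" by (rule const_avg[OF assms])
  then show "convergent (avg_det_seq s M e)" unfolding convergent_def by blast
  show "Et s M e = c" unfolding Et_def by (rule limI[OF t])
qed

lemma const_freq:
  assumes "\<And>t. measure M {\<omega> \<in> space M. \<omega> t = i} = c"
  shows "convergent (test_freq_seq M i)"
proof -
  have "\<forall>\<^sub>F H in sequentially. c = test_freq_seq M i H"
    unfolding eventually_sequentially
    by (rule exI[of _ 1]) (auto simp: test_freq_seq_def assms)
  then have "test_freq_seq M i \<longlonglongrightarrow> c" by (rule Lim_transform_eventually[OF tendsto_const])
  then show ?thesis unfolding convergent_def by blast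
qed

lemma phase_freq:
  assumes k: "0 < k" and i: "i < k"
  shows "measure (phase_sched k) {\<omega> \<in> space (phase_sched k). \<omega> t = i} = 1 / real k"
proof -
  have ms: "{\<omega> \<in> space seq_space. \<omega> t = i} \<in> sets seq_space"
  proof -
    have "Measurable.pred seq_space (\<lambda>\<omega>. \<omega> t = i)" unfolding seq_space_def by (rule pred_coord)
    then show ?thesis by (simp add: pred_def)
  qed
  have "i \<in> (\<lambda>u. (t+u) mod k) ` {..<k}" using modsurj[OF k, of t] i by simp
  then obtain u0 where u0: "u0 < k" "(t + u0) mod k = i" by blast
  have set: "{..<k} \<inter> {u. (t+u) mod k = i} = {u0}"
  proof (rule set_eqI, rule iffI)
    fix x assume "x \<in> {..<k} \<inter> {u. (t+u) mod k = i}"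
    then show "x \<in> {u0}" using u0 modinj[of x k u0 t] by simp
  next
    fix x assume "x \<in> {u0}"
    then show "x \<in> {..<k} \<inter> {u. (t+u) mod k = i}" using u0 by simp
  qed
  have "measure (phase_sched k) {\<omega> \<in> space (phase_sched k). \<omega> t = i}
      = measure (measure_pmf (pmf_of_set {..<k})) {u. (t+u) mod k = i}"
  proof -
    have sp: "space (phase_sched k) = space seq_space" unfolding phase_sched_def by simp
    have pre: "(\<lambda>u t. (t+u) mod k) -` {\<omega> \<in> space seq_space. \<omega> t = i} \<inter> space (measure_pmf (pmf_of_set {..<k}))
       = {u. (t+u) mod k = i}" by (auto simp: space_seq)
    have md: "measure (distr (measure_pmf (pmf_of_set {..<k})) seq_space (\<lambda>u t. (t+u) mod k)) {\<omega> \<in> space seq_space. \<omega> t = i}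
       = measure (measure_pmf (pmf_of_set {..<k})) ((\<lambda>u t. (t+u) mod k) -` {\<omega> \<in> space seq_space. \<omega> t = i} \<inter> space (measure_pmf (pmf_of_set {..<k})))"
      by (rule measure_distr[OF phi_meas ms])
    show ?thesis unfolding sp unfolding phase_sched_def md pre by (rule refl)
  qed
  also have "\<dots> = real (card ({..<k} \<inter> {u. (t+u) mod k = i})) / real (card {..<k::nat})" using k by (subst measure_pmf_of_set) auto
  also have "\<dots> = 1 / real k" unfolding set by simp
  finally show ?thesis .
qed

definition Dk :: "nat \<Rightarrow> real" where "Dk k = real (\<Sum>i<k. Suc i) / real k"

lemma phase_valid: "0 < k \<Longrightarrow> valid_schedule k k (\<lambda>i. {i}) (phase_sched k)"
proof -
  assume k: "0 < k"
  have nn: "0 \<le> real (\<Sum>i<k. Suc i) / real k" by (simp add: sum_nonneg)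
  have a: "\<forall>e<k. (\<exists>B::real. \<forall>t. det_time (\<lambda>i. {i}) (phase_sched k) e t \<le> ennreal B) \<and>
     convergent (avg_det_seq (\<lambda>i. {i}) (phase_sched k) e)"
  proof (intro allI impI conjI)
    fix e assume e: "e < k"
    show "\<exists>B::real. \<forall>t. det_time (\<lambda>i. {i}) (phase_sched k) e t \<le> ennreal B"
      using phase_det[OF k e] by auto
    show "convergent (avg_det_seq (\<lambda>i. {i}) (phase_sched k) e)"
      by (rule const_Et(1)[OF phase_det[OF k e] nn])
  qed
  have b: "\<forall>i<k. convergent (test_freq_seq (phase_sched k) i)"
    using const_freq[OF phase_freq[OF k]] by blast
  show ?thesis unfolding valid_schedule_def using phase_stoch[OF k] a b by blast
qed

lemma phase_Et: "0 < k \<Longrightarrow> e < k \<Longrightarrow> Et (\<lambda>i. {i}) (phase_sched k) e = Dk k"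
  unfolding Dk_def by (rule const_Et(2)) (auto simp: phase_det sum_nonneg)

lemma phase_sum: "0 < k \<Longrightarrow> sum_obj k (\<lambda>i. {i}) (phase_sched k) = Dk k"
  by (simp add: sum_obj_eq phase_Et)

lemma phase_max: "0 < k \<Longrightarrow> max_obj k (\<lambda>i. {i}) (phase_sched k) = Dk k"
proof -
  assume k: "0 < k"
  have "(\<lambda>e. Et (\<lambda>i. {i}) (phase_sched k) e) ` {..<k} = {Dk k}"
    using k phase_Et[OF k] by auto
  then show ?thesis unfolding max_obj_def by simp
qed

abbreviation PQ :: "nat pmf \<Rightarrow> (nat \<Rightarrow> nat) measure" where
  "PQ q \<equiv> PiM UNIV (\<lambda>_. measure_pmf q)"

lemma space_PQ: "space (PQ q) = UNIV"
  by (simp add: space_PiM)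

lemma sets_PQ: "sets (PQ q) = sets seq_space"
  unfolding seq_space_def by (rule sets_PiM_cong) auto

lemma ps_PQ: "prob_space (PQ q)"
  by (rule prob_space_PiM) (simp add: measure_pmf.prob_space_axioms)

lemma cyl:
  "emeasure (PQ q) {\<omega> \<in> space (PQ q). \<forall>i<j. \<omega> (t+i) \<in> B} = emeasure (measure_pmf q) B ^ j"
proof -
  have eq: "{\<omega> \<in> space (PQ q). \<forall>i<j. \<omega> (t+i) \<in> B} =
      prod_emb UNIV (\<lambda>_. measure_pmf q) {t..<t+j} (PiE {t..<t+j} (\<lambda>_. B))"
  proof -
    have iff: "(\<forall>i<j. \<omega> (t+i) \<in> B) \<longleftrightarrow> (\<forall>x\<in>{t..<t+j}. \<omega> x \<in> B)" for \<omega> :: "nat \<Rightarrow> nat"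
    proof
      assume "\<forall>i<j. \<omega> (t+i) \<in> B"
      then show "\<forall>x\<in>{t..<t+j}. \<omega> x \<in> B"
        by (metis atLeastLessThan_iff add_diff_inverse_nat add_less_cancel_left not_le)
    qed auto
    show ?thesis unfolding prod_emb_def space_PQ iff by (auto simp: restrict_PiE_iff Pi_iff)
  qed
  have "emeasure (PQ q) (prod_emb UNIV (\<lambda>_. measure_pmf q) {t..<t+j} (PiE {t..<t+j} (\<lambda>_. B)))
      = (\<Prod>i\<in>{t..<t+j}. emeasure (measure_pmf q) B)"
    by (rule emeasure_PiM_emb) (auto simp: measure_pmf.prob_space_axioms)
  then show ?thesis unfolding eq by simp
qed

lemma det_PQ:
  "det_time (\<lambda>i. {i}) (PQ q) e t = (if pmf q e = 0 then \<top> else ennreal (1 / pmf q e))"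
proof -
  let ?A = "\<lambda>j. {\<omega>. \<forall>i<j. e \<notin> {\<omega> (t+i)}}"
  have A: "?A j = {\<omega> \<in> space (PQ q). \<forall>i<j. \<omega> (t+i) \<in> - {e}}" for j
    by (auto simp: space_PQ)
  have Ameas: "?A j \<in> sets (PQ q)" for j
  proof -
    have "Measurable.pred seq_space (\<lambda>\<omega>. \<forall>i<j. e \<notin> {\<omega> (t+i)})" unfolding seq_space_def by measurable
    then show ?thesis unfolding pred_def sets_PQ by (simp add: space_seq)
  qed
  have c: "emeasure (measure_pmf q) (- {e}) = ennreal (1 - pmf q e)"
  proof -
    have "measure (measure_pmf q) (space (measure_pmf q) - {e}) = 1 - measure (measure_pmf q) {e}"
      by (rule measure_pmf.prob_compl) simp
    then show ?thesis by (simp add: measure_pmf.emeasure_eq_measure measure_pmf_single Compl_eq_Diff_UNIV)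
  qed
  have "det_time (\<lambda>i. {i}) (PQ q) e t = (\<integral>\<^sup>+\<omega>. (\<Sum>j. indicator (?A j) \<omega>) \<partial>PQ q)"
    unfolding det_time_def by (rule nn_integral_cong) (rule hit_sum)
  also have "\<dots> = (\<Sum>j. \<integral>\<^sup>+\<omega>. indicator (?A j) \<omega> \<partial>PQ q)"
    by (rule nn_integral_suminf) (use Ameas in auto)
  also have "\<dots> = (\<Sum>j. emeasure (PQ q) (?A j))"
    using Ameas by (simp add: nn_integral_indicator)
  also have "\<dots> = (\<Sum>j. ennreal ((1 - pmf q e) ^ j))"
  proof -
    have nn: "0 \<le> 1 - pmf q e" using pmf_le_1[of q e] by simp
    show ?thesis unfolding A cyl c by (simp only: ennreal_power[OF nn])
  qed
  also have "\<dots> = (if pmf q e = 0 then \<top> else ennreal (1 / pmf q e))"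
  proof (cases "pmf q e = 0")
    case True
    then show ?thesis by (simp add: suminf_one_ennreal)
  next
    case False
    then have p: "0 < pmf q e" "pmf q e \<le> 1" by (auto simp: pmf_le_1 order_less_le)
    have "(\<lambda>j. (1 - pmf q e) ^ j) sums (1 / (1 - (1 - pmf q e)))"
      by (rule geometric_sums) (use p in auto)
    then have "(\<Sum>j. ennreal ((1 - pmf q e) ^ j)) = ennreal (1 / (1 - (1 - pmf q e)))"
      by (rule suminf_ennreal_eq[rotated]) (use p in auto)
    then show ?thesis using False by simp
  qed
  finally show ?thesis .
qed

lemma harm:
  fixes p :: "nat \<Rightarrow> real"
  assumes pos: "\<And>e. e < k \<Longrightarrow> 0 < p e" and s: "(\<Sum>e<k. p e) \<le> 1"
  shows "real k * real k \<le> (\<Sum>e<k. 1 / p e)"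
proof -
  have each: "2 * real k - real k * real k * p e \<le> 1 / p e" if "e < k" for e
  proof -
    have pe: "0 < p e" using pos that .
    have "0 \<le> (1 - real k * p e)^2" by simp
    then have "2 * real k * p e - real k * real k * p e * p e \<le> 1" by (simp add: power2_eq_square algebra_simps)
    then have "(2 * real k - real k * real k * p e) * p e \<le> 1" by (simp add: algebra_simps)
    then show ?thesis using pe by (simp add: le_divide_eq)
  qed
  have "(\<Sum>e<k. 2 * real k - real k * real k * p e) \<le> (\<Sum>e<k. 1 / p e)"
    by (rule sum_mono) (use each in auto)
  moreover have "(\<Sum>e<k. 2 * real k - real k * real k * p e) = 2 * real k * real k - real k * real k * (\<Sum>e<k. p e)"
    by (simp add: sum_subtractf sum_distrib_left)
  moreover have "real k * real k * (\<Sum>e<k. p e) \<le> real k * real k"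
    using s by (simp add: mult_left_le)
  ultimately show ?thesis by linarith
qed

lemma mem_lower:
  assumes mem: "memoryless_schedule m M" and v: "valid_schedule k m (\<lambda>i. {i}) M" and k: "0 < k"
  shows "real k \<le> sum_obj k (\<lambda>i. {i}) M"
proof -
  obtain q where q: "M = PQ q" using mem unfolding memoryless_schedule_def by blast
  have pos: "0 < pmf q e" if e: "e < k" for e
  proof (rule ccontr)
    assume "\<not> 0 < pmf q e"
    then have "pmf q e = 0" using pmf_nonneg[of q e] by simp
    then have "det_time (\<lambda>i. {i}) M e 0 = \<top>" unfolding q det_PQ by simp
    moreover have "\<exists>B::real. \<forall>t. det_time (\<lambda>i. {i}) M e t \<le> ennreal B" using v e unfolding valid_schedule_def by blast
    ultimately show False by (metis ennreal_less_top leD top_greatest order_antisym)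
  qed
  have Et: "Et (\<lambda>i. {i}) M e = 1 / pmf q e" if e: "e < k" for e
    using pos[OF e] unfolding q by (intro const_Et(2)) (auto simp: det_PQ)
  have s: "(\<Sum>e<k. pmf q e) \<le> 1"
    using measure_measure_pmf_finite[of "{..<k}" q] measure_pmf.prob_le_1[of q "{..<k}"] by simp
  have "real k * real k \<le> (\<Sum>e<k. 1 / pmf q e)" by (rule harm) (use pos s in auto)
  also have "\<dots> = (\<Sum>e<k. Et (\<lambda>i. {i}) M e)" by (simp add: Et)
  finally show ?thesis unfolding sum_obj_eq using k by (simp add: le_divide_eq)
qed

definition unif :: "nat \<Rightarrow> (nat \<Rightarrow> nat) measure" where
  "unif k = PQ (pmf_of_set {..<k})"

lemma unif_det: "0 < k \<Longrightarrow> e < k \<Longrightarrow> det_time (\<lambda>i. {i}) (unif k) e t = ennreal (real k)"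
proof -
  assume k: "0 < k" and e: "e < k"
  have ne: "{..<k} \<noteq> {}" using k by auto
  have "pmf (pmf_of_set {..<k}) e = 1 / real k" using ne e by simp
  then show ?thesis unfolding unif_def det_PQ using k by simp
qed

lemma unif_mem: "0 < k \<Longrightarrow> memoryless_schedule k (unif k)"
proof -
  assume k: "0 < k"
  have ne: "{..<k} \<noteq> {}" using k by auto
  show ?thesis unfolding memoryless_schedule_def unif_def
    by (intro exI[of _ "pmf_of_set {..<k}"]) (simp add: ne)
qed

lemma unif_valid: "0 < k \<Longrightarrow> valid_schedule k k (\<lambda>i. {i}) (unif k)"
proof -
  assume k: "0 < k"
  let ?q = "pmf_of_set {..<k}"
  have stoch: "stoch_schedule k (unif k)"
    unfolding stoch_schedule_def unif_def
  proof (intro conjI)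
    show "prob_space (PQ ?q)" by (rule ps_PQ)
    show "sets (PQ ?q) = sets seq_space" by (rule sets_PQ)
    show "AE \<omega> in PQ ?q. \<forall>t. \<omega> t < k"
    proof (subst AE_all_countable, intro allI)
      fix t
      let ?N = "{\<omega> \<in> space (PQ ?q). \<forall>i<1. \<omega> (t+i) \<in> - {..<k}}"
      have Nm: "?N \<in> sets (PQ ?q)"
      proof -
        have "Measurable.pred seq_space (\<lambda>\<omega>. \<forall>i<1. \<omega> (t+i) \<in> - {..<k})" unfolding seq_space_def by measurable
        then show ?thesis unfolding pred_def sets_PQ by (simp add: space_seq space_PQ)
      qed
      have "emeasure (PQ ?q) ?N = 0"
      proof -
        have ne: "{..<k} \<noteq> {}" using k by auto
        have "emeasure (measure_pmf ?q) (- {..<k}) = 0"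
          by (subst emeasure_pmf_of_set) (auto simp: ne)
        then show ?thesis unfolding cyl by simp
      qed
      moreover have "{\<omega> \<in> space (PQ ?q). \<not> \<omega> t < k} = ?N" by auto
      ultimately show "AE \<omega> in PQ ?q. \<omega> t < k" by (subst AE_iff_measurable[OF Nm]) auto
    qed
  qed
  have a: "\<forall>e<k. (\<exists>B::real. \<forall>t. det_time (\<lambda>i. {i}) (unif k) e t \<le> ennreal B) \<and>
     convergent (avg_det_seq (\<lambda>i. {i}) (unif k) e)"
  proof (intro allI impI conjI)
    fix e assume e: "e < k"
    show "\<exists>B::real. \<forall>t. det_time (\<lambda>i. {i}) (unif k) e t \<le> ennreal B"
      using unif_det[OF k e] by auto
    show "convergent (avg_det_seq (\<lambda>i. {i}) (unif k) e)"
      by (rule const_Et(1)[OF unif_det[OF k e]]) simp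
  qed
  have b: "\<forall>i<k. convergent (test_freq_seq (unif k) i)"
  proof (intro allI impI)
    fix i assume "i < k"
    show "convergent (test_freq_seq (unif k) i)"
    proof (rule const_freq)
      fix t
      have "{\<omega> \<in> space (unif k). \<omega> t = i} = {\<omega> \<in> space (PQ ?q). \<forall>j<1. \<omega> (t+j) \<in> {i}}"
        unfolding unif_def by auto
      then show "measure (unif k) {\<omega> \<in> space (unif k). \<omega> t = i} = enn2real (emeasure (measure_pmf ?q) {i} ^ 1)"
        unfolding measure_def by (simp only: unif_def cyl)
    qed
  qed
  show ?thesis unfolding valid_schedule_def using stoch a b by blast
qed

lemma unif_Et: "0 < k \<Longrightarrow> e < k \<Longrightarrow> Et (\<lambda>i. {i}) (unif k) e = real k"
  by (rule const_Et(2)) (auto simp: unif_det)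

lemma unif_sum: "0 < k \<Longrightarrow> sum_obj k (\<lambda>i. {i}) (unif k) = real k"
  by (simp add: sum_obj_eq unif_Et)

lemma unif_max: "0 < k \<Longrightarrow> max_obj k (\<lambda>i. {i}) (unif k) = real k"
proof -
  assume k: "0 < k"
  have "(\<lambda>e. Et (\<lambda>i. {i}) (unif k) e) ` {..<k} = {real k}"
    using k unif_Et[OF k] by auto
  then show ?thesis unfolding max_obj_def by simp
qed

lemma inf_attain: "x \<in> A \<Longrightarrow> (\<And>y. y \<in> A \<Longrightarrow> x \<le> y) \<Longrightarrow> Inf A = (x::ereal)"
  by (meson Inf_greatest Inf_lower antisym)

lemma Dk_eq: "0 < k \<Longrightarrow> Dk k = (real k + 1) / 2"
  unfolding Dk_def gauss_real by (simp add: field_simps)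

lemma valid_sum_lower: "valid_schedule k m (\<lambda>i. {i}) M \<Longrightarrow> 0 < k \<Longrightarrow> Dk k \<le> sum_obj k (\<lambda>i. {i}) M"
  unfolding Dk_def sum_obj_eq using valid_lower[of k m M] by (simp add: divide_right_mono)

lemma opt_vals:
  assumes k: "0 < k"
  shows "opt_SUM k k (\<lambda>i. {i}) = ereal (Dk k)" "opt_MAX k k (\<lambda>i. {i}) = ereal (Dk k)"
    "optM_SUM k k (\<lambda>i. {i}) = ereal (real k)" "optM_MAX k k (\<lambda>i. {i}) = ereal (real k)"
proof -
  show "opt_SUM k k (\<lambda>i. {i}) = ereal (Dk k)" unfolding opt_SUM_def
  proof (rule inf_attain)
    show "ereal (Dk k) \<in> {ereal (sum_obj k (\<lambda>i. {i}) M) |M. valid_schedule k k (\<lambda>i. {i}) M}"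
      using phase_valid[OF k] phase_sum[OF k] by force
  next
    fix y assume "y \<in> {ereal (sum_obj k (\<lambda>i. {i}) M) |M. valid_schedule k k (\<lambda>i. {i}) M}"
    then show "ereal (Dk k) \<le> y" using valid_sum_lower k by auto
  qed
  show "opt_MAX k k (\<lambda>i. {i}) = ereal (Dk k)" unfolding opt_MAX_def
  proof (rule inf_attain)
    show "ereal (Dk k) \<in> {ereal (max_obj k (\<lambda>i. {i}) M) |M. valid_schedule k k (\<lambda>i. {i}) M}"
      using phase_valid[OF k] phase_max[OF k] by force
  next
    fix y assume "y \<in> {ereal (max_obj k (\<lambda>i. {i}) M) |M. valid_schedule k k (\<lambda>i. {i}) M}"
    then obtain M where M: "y = ereal (max_obj k (\<lambda>i. {i}) M)" "valid_schedule k k (\<lambda>i. {i}) M" by blast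
    have "Dk k \<le> sum_obj k (\<lambda>i. {i}) M" by (rule valid_sum_lower[OF M(2) k])
    also have "\<dots> \<le> max_obj k (\<lambda>i. {i}) M" by (rule sum_le_max[OF k])
    finally show "ereal (Dk k) \<le> y" using M(1) by simp
  qed
  show "optM_SUM k k (\<lambda>i. {i}) = ereal (real k)" unfolding optM_SUM_def
  proof (rule inf_attain)
    show "ereal (real k) \<in> {ereal (sum_obj k (\<lambda>i. {i}) M) |M. memoryless_schedule k M \<and> valid_schedule k k (\<lambda>i. {i}) M}"
      using unif_mem[OF k] unif_valid[OF k] unif_sum[OF k] by force
  next
    fix y assume "y \<in> {ereal (sum_obj k (\<lambda>i. {i}) M) |M. memoryless_schedule k M \<and> valid_schedule k k (\<lambda>i. {i}) M}"
    then show "ereal (real k) \<le> y" using mem_lower k by auto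
  qed
  show "optM_MAX k k (\<lambda>i. {i}) = ereal (real k)" unfolding optM_MAX_def
  proof (rule inf_attain)
    show "ereal (real k) \<in> {ereal (max_obj k (\<lambda>i. {i}) M) |M. memoryless_schedule k M \<and> valid_schedule k k (\<lambda>i. {i}) M}"
      using unif_mem[OF k] unif_valid[OF k] unif_max[OF k] by force
  next
    fix y assume "y \<in> {ereal (max_obj k (\<lambda>i. {i}) M) |M. memoryless_schedule k M \<and> valid_schedule k k (\<lambda>i. {i}) M}"
    then obtain M where M: "y = ereal (max_obj k (\<lambda>i. {i}) M)" "memoryless_schedule k M" "valid_schedule k k (\<lambda>i. {i}) M" by blast
    have "real k \<le> sum_obj k (\<lambda>i. {i}) M" by (rule mem_lower[OF M(2) M(3) k])
    also have "\<dots> \<le> max_obj k (\<lambda>i. {i}) M" by (rule sum_le_max[OF k])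
    finally show "ereal (real k) \<le> y" using M(1) by simp
  qed
qed

theorem lemma6:
  fixes \<epsilon> :: real
  assumes "\<epsilon> > 0"
  shows "\<exists>n m s. is_instance n m s \<and>
           opt_SUM n m s < \<infinity> \<and> optM_SUM n m s < \<infinity> \<and>
           optM_MAX n m s = optM_SUM n m s \<and>
           optM_SUM n m s \<ge> ereal (2 - \<epsilon>) * opt_MAX n m s \<and>
           opt_MAX n m s = opt_SUM n m s"
proof -
  define k where "k = nat \<lceil>2 / \<epsilon>\<rceil> + 1"
  have k: "0 < k" unfolding k_def by simp
  have "2 / \<epsilon> \<le> real k" unfolding k_def by linarith
  then have "2 \<le> \<epsilon> * real k" using assms by (simp add: divide_le_eq mult.commute)
  then have ineq: "(2 - \<epsilon>) * ((real k + 1) / 2) \<le> real k" using assms by (simp add: field_simps)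
  have inst: "is_instance k k (\<lambda>i. {i})" unfolding is_instance_def using k by auto
  show ?thesis
    apply (rule exI[of _ k], rule exI[of _ k], rule exI[of _ "\<lambda>i. {i}"])
    using inst ineq unfolding opt_vals[OF k] Dk_eq[OF k] by simp
qed

end
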